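(* Let $\lambda$ be a singular cardinal. Then $\mathfrak{d}_\lambda>\lambda$, and moreover $\operatorname{cf}(\mathfrak{d}_\lambda)>\lambda$.
   Context: For $f,g\in{}^\lambda\lambda$, $f\le^* g$ means $|\{\beta<\lambda:f(\beta)>g(\beta)\}|<\lambda$ (size less than $\lambda$, not merely bounded). $\mathfrak{d}_\lambda$ is the minimal cardinality of a family $\mathcal{D}\subseteq{}^\lambda\lambda$ such that every $f\in{}^\lambda\lambda$ satisfies $f\le^* g$ for some $g\in\mathcal{D}$. *)

theory Defs
  imports Main
begin

unbundle cardinal_syntax

text \<open>The cardinal lambda is represented by a cardinal well-order r on a type 'a
  (card_order r, so Field r = UNIV); functions lambda -> lambda are then 'a => 'a,
  and values are compared with r.\<close>

definition singular_card :: "'a rel \<Rightarrow> bool" where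
  "singular_card r \<equiv> Card_order r \<and> infinite (Field r) \<and> \<not> regularCard r"

definition le_star :: "'a rel \<Rightarrow> ('a \<Rightarrow> 'a) \<Rightarrow> ('a \<Rightarrow> 'a) \<Rightarrow> bool" where
  "le_star r f g \<equiv> |{b. (g b, f b) \<in> r \<and> f b \<noteq> g b}| <o r"

definition dominating :: "'a rel \<Rightarrow> ('a \<Rightarrow> 'a) set \<Rightarrow> bool" where
  "dominating r D \<equiv> \<forall>f. \<exists>g\<in>D. le_star r f g"

end

theory Submission
  imports Defs
begin

lemma main_diag:
  fixes r :: "'a rel" and I :: "'i set" and S :: "'i \<Rightarrow> ('a\<Rightarrow>'a) set"
  assumes co: "card_order r" and inf: "infinite (UNIV::'a set)" and I: "|I| \<le>o r"
    and S: "\<forall>i\<in>I. \<forall>e. inj e \<longrightarrow> (\<exists>\<phi>. \<forall>g\<in>S i. \<not> le_star r \<phi> (g \<circ> e))"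
  shows "\<exists>f. \<forall>i\<in>I. \<forall>g\<in>S i. \<not> le_star r f g"
proof -
  have Fr: "Field r = UNIV" and Cr: "Card_order r"
    using card_order_on_Card_order[OF co] by auto
  have U: "|UNIV::'a set| =o r" using card_of_Field_ordIso[OF Cr] Fr by simp
  hence "|UNIV::'a set| \<le>o r" using ordIso_iff_ordLeq by blast
  hence "|I \<times> (UNIV::'a set)| \<le>o r"
    using card_of_Times_ordLeq_infinite_Field[OF _ I _ Cr] inf Fr by simp
  hence "|I \<times> (UNIV::'a set)| \<le>o |UNIV::'a set|"
    by (rule ordLeq_ordIso_trans[OF _ ordIso_symmetric[OF U]])
  hence "\<exists>h. inj_on h (I \<times> (UNIV::'a set)) \<and> h ` (I \<times> UNIV) \<subseteq> (UNIV::'a set)"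
    by (simp only: card_of_ordLeq[symmetric])
  then obtain h :: "'i \<times> 'a \<Rightarrow> 'a" where h: "inj_on h (I \<times> UNIV)"
    by blast
  define e where "e i = (\<lambda>\<gamma>. h (i,\<gamma>))" for i
  have einj: "inj (e i)" if "i \<in> I" for i
    using h that unfolding e_def inj_on_def by auto
  have "\<forall>i\<in>I. \<exists>\<phi>. \<forall>g\<in>S i. \<not> le_star r \<phi> (g \<circ> e i)"
    using S einj by blast
  from bchoice[OF this] obtain \<phi> where \<phi>: "\<forall>i\<in>I. \<forall>g\<in>S i. \<not> le_star r (\<phi> i) (g \<circ> e i)"
    by blast
  define f where "f \<beta> = (if \<beta> \<in> h ` (I \<times> UNIV)
     then (let p = the_inv_into (I \<times> UNIV) h \<beta> in \<phi> (fst p) (snd p)) else \<beta>)" for \<beta>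
  have fh: "f (h (i,\<gamma>)) = \<phi> i \<gamma>" if "i \<in> I" for i \<gamma>
    using that h by (simp add: f_def the_inv_into_f_f)
  show ?thesis
  proof (intro exI ballI notI)
    fix i g assume i: "i \<in> I" and g: "g \<in> S i" and le: "le_star r f g"
    define A where "A = {\<gamma>. ((g \<circ> e i) \<gamma>, \<phi> i \<gamma>) \<in> r \<and> \<phi> i \<gamma> \<noteq> (g \<circ> e i) \<gamma>}"
    define B where "B = {b. (g b, f b) \<in> r \<and> f b \<noteq> g b}"
    have "e i ` A \<subseteq> B" using fh[OF i] unfolding A_def B_def e_def by auto
    moreover have "inj_on (e i) A" using einj[OF i] inj_on_subset by blast
    ultimately have "|A| \<le>o |B|" using card_of_ordLeq by blast
    moreover have "|B| <o r" using le unfolding le_star_def B_def .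
    ultimately have "|A| <o r" using ordLeq_ordLess_trans by blast
    hence "le_star r (\<phi> i) (g \<circ> e i)" unfolding le_star_def A_def .
    thus False using \<phi> i g by blast
  qed
qed

theorem claim3p2:
  fixes r :: "'a rel" and D :: "('a \<Rightarrow> 'a) set"
  assumes "card_order r"
    and "singular_card r"
    and "dominating r D"
    and "\<forall>D'. dominating r D' \<longrightarrow> (card_of D, card_of D') \<in> ordLeq"
  shows "(r, card_of D) \<in> ordLess \<and>
         (\<forall>K. K \<subseteq> D \<and> cofinal K (card_of D) \<longrightarrow> (r, card_of K) \<in> ordLess)"
proof -
  have Fr: "Field r = UNIV" and Cr: "Card_order r"
    using card_order_on_Card_order[OF assms(1)] by auto
  have inf: "infinite (UNIV::'a set)" using assms(2) Fr unfolding singular_card_def by simp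
  have U: "|UNIV::'a set| =o r" using card_of_Field_ordIso[OF Cr] Fr by simp
  have wr: "Well_order r" using Cr by (simp add: card_order_on_well_order_on)
  have part1: "r <o (card_of D)"
  proof (rule ccontr)
    assume "\<not> r <o (card_of D)"
    hence DI: "(card_of D) \<le>o r" using not_ordLess_iff_ordLeq wr card_of_Well_order by blast
    have nu: "\<forall>x. \<exists>y. (y, x) \<notin> r"
      using Card_order_infinite_not_under[OF Cr] inf Fr unfolding under_def by auto
    have "\<exists>f. \<forall>i\<in>D. \<forall>g\<in>{i}. \<not> le_star r f g"
    proof (rule main_diag[OF assms(1) inf DI], intro ballI allI impI)
      fix i and e :: "'a \<Rightarrow> 'a" assume "i \<in> D" "inj e"
      obtain sc where sc: "\<And>x. (sc x, x) \<notin> r" using choice[OF nu] by blast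
      have tot: "(x, sc x) \<in> r \<and> sc x \<noteq> x" for x
      proof -
        have "Total r" "Refl r" using wr unfolding well_order_on_def linear_order_on_def
            partial_order_on_def preorder_on_def by auto
        hence "x \<noteq> sc x \<longrightarrow> (x, sc x) \<in> r \<or> (sc x, x) \<in> r" "(x,x) \<in> r"
          using Fr unfolding total_on_def refl_on_def by auto
        thus ?thesis using sc[of x] by auto
      qed
      show "\<exists>\<phi>. \<forall>g\<in>{i}. \<not> le_star r \<phi> (g \<circ> e)"
      proof (intro exI[of _ "\<lambda>b. sc ((i \<circ> e) b)"] ballI)
        fix g assume "g \<in> {i}"
        hence gi: "g = i" by simp
        have "{b. ((g \<circ> e) b, sc ((g \<circ> e) b)) \<in> r \<and> sc ((g \<circ> e) b) \<noteq> (g \<circ> e) b} = UNIV"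
          using tot by auto
        moreover have "\<not> |UNIV::'a set| <o r" using U not_ordLess_ordIso by blast
        ultimately show "\<not> le_star r (\<lambda>b. sc ((i \<circ> e) b)) (g \<circ> e)"
          unfolding le_star_def gi by simp
      qed
    qed
    thus False using assms(3) unfolding dominating_def by auto
  qed
  have part2: "r <o |K|" if K: "K \<subseteq> D" and cof: "cofinal K (card_of D)" for K
  proof (rule ccontr)
    assume "\<not> r <o |K|"
    hence KI: "|K| \<le>o r" using not_ordLess_iff_ordLeq wr card_of_Well_order by blast
    have "\<exists>f. \<forall>i\<in>K. \<forall>g\<in>underS (card_of D) i. \<not> le_star r f g"
    proof (rule main_diag[OF assms(1) inf KI], intro ballI allI impI)
      fix k and e :: "'a \<Rightarrow> 'a" assume k: "k \<in> K" "inj e"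
      show "\<exists>\<phi>. \<forall>g\<in>underS (card_of D) k. \<not> le_star r \<phi> (g \<circ> e)"
      proof (rule ccontr)
        assume "\<not> ?thesis"
        hence "dominating r ((\<lambda>g. g \<circ> e) ` underS (card_of D) k)"
          unfolding dominating_def by blast
        hence a1: "card_of D \<le>o card_of ((\<lambda>g. g \<circ> e) ` underS (card_of D) k)" using assms(4) by blast
        have a2: "card_of ((\<lambda>g. g \<circ> e) ` underS (card_of D) k) \<le>o card_of (underS (card_of D) k)" by (rule card_of_image)
        have kF: "k \<in> Field (card_of D)" using k K by (simp add: Field_card_of subsetD)
        have a3: "card_of (underS (card_of D) k) <o card_of D"
          by (rule card_of_underS[OF card_of_Card_order kF])
        have "card_of D <o card_of D"
          using ordLeq_ordLess_trans[OF ordLeq_transitive[OF a1 a2] a3] .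
        thus False using ordLess_irreflexive by blast
      qed
    qed
    then obtain f where f: "\<forall>i\<in>K. \<forall>g\<in>underS (card_of D) i. \<not> le_star r f g" by blast
    obtain g where g: "g \<in> D" "le_star r f g" using assms(3) unfolding dominating_def by blast
    then obtain b where "b \<in> K" "g \<noteq> b" "(g,b) \<in> (card_of D)"
      using cof unfolding cofinal_def Field_card_of by blast
    hence "g \<in> underS (card_of D) b" unfolding underS_def by auto
    thus False using f g \<open>b \<in> K\<close> by blast
  qed
  show ?thesis
  proof (intro conjI allI impI)
    show "(r, card_of D) \<in> ordLess" using part1 .
    fix K assume KK: "K \<subseteq> D \<and> cofinal K (card_of D)"
    show "(r, card_of K) \<in> ordLess" using part2[of K] KK by simp
  qed
qed

end
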